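(* Let $n\ge k\ge 4$. Let $A$ be a finite arithmetic progression in $\mathbb R$, let $p$ and $q$ be the second and second-to-last points of $A$, let $D\subseteq\{p,q\}$, and suppose $V=A\setminus D$ has exactly $n$ elements. Then $V$ is optimal for $k$-term arithmetic progressions if and only if either (i) $D=\emptyset$, or (ii) $k-1$ divides $n$ and $|D|=1$.
   Context: A finite arithmetic progression is a set $\{a,a+d,\dots,a+(m-1)d\}\subseteq\mathbb R$ with $d>0$; its second point is $a+d$ and its second-to-last point is $a+(m-2)d$. $S_{\mathcal A_k}(V)$ is the number of $k$-term arithmetic progressions contained in $V$. An $n$-set $V$ is optimal for $k$-term arithmetic progressions if $S_{\mathcal A_k}(V)$ equals the maximum of $S_{\mathcal A_k}(W)$ over all $n$-subsets $W\subseteq\mathbb R$, namely $(n-r)(n+r-k+1)/(2k-2)$ with $r$ the remainder of $n$ modulo $k-1$. *)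

theory Defs
  imports Complex_Main
begin

definition AP_set :: "real \<Rightarrow> real \<Rightarrow> nat \<Rightarrow> real set" where
  "AP_set a d m = {a + real i * d | i. i < m}"

definition is_kAP :: "nat \<Rightarrow> real set \<Rightarrow> bool" where
  "is_kAP k P \<longleftrightarrow> (\<exists>a d. d > 0 \<and> P = AP_set a d k)"

definition S_AP :: "nat \<Rightarrow> real set \<Rightarrow> nat" where
  "S_AP k V = card {P. is_kAP k P \<and> P \<subseteq> V}"

definition optimal_AP :: "nat \<Rightarrow> nat \<Rightarrow> real set \<Rightarrow> bool" where
  "optimal_AP k n V \<longleftrightarrow> finite V \<and> card V = n \<and>
     (\<forall>W. finite W \<and> card W = n \<longrightarrow> S_AP k W \<le> S_AP k V)"

end

theory Submission
  imports Defs
begin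


definition fAP :: "nat \<Rightarrow> nat \<Rightarrow> nat" where
  "fAP s n = (\<Sum>i<n. i div s)"

definition pairsAP :: "nat \<Rightarrow> real set \<Rightarrow> (real \<times> real) set" where
  "pairsAP k V = {(b,e). 0 < e \<and> (\<forall>j<k. b + real j * e \<in> V)}"

definition ipairs :: "nat \<Rightarrow> nat \<Rightarrow> nat set \<Rightarrow> (nat \<times> nat) set" where
  "ipairs k N I = {(i,t). 0 < t \<and> (\<forall>j<k. i + j*t < N \<and> i + j*t \<notin> I)}"

lemma fAP_Suc: "fAP s (Suc n) = fAP s n + n div s"
  by (simp add: fAP_def)

lemma mem_AP_set: "x \<in> AP_set b e k \<longleftrightarrow> (\<exists>i<k. x = b + real i * e)"
  unfolding AP_set_def by auto

lemma AP_set_inj: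
  assumes "0 < e" "0 < e'" "2 \<le> k" "AP_set b e k = AP_set b' e' k"
  shows "b = b' \<and> e = e'"
proof -
  have "b \<in> AP_set b' e' k" unfolding assms(4)[symmetric] mem_AP_set using assms(3) by (auto intro!: exI[of _ 0])
  then obtain i where i: "b = b' + real i * e'" unfolding mem_AP_set by auto
  have "b' \<in> AP_set b e k" unfolding assms(4) mem_AP_set using assms(3) by (auto intro!: exI[of _ 0])
  then obtain i' where i': "b' = b + real i' * e" unfolding mem_AP_set by auto
  have "b \<ge> b'" using i assms(2) by simp
  moreover have "b' \<ge> b" using i' assms(1) by simp
  ultimately have bb: "b = b'" by simp
  have "b + e \<in> AP_set b' e' k" unfolding assms(4)[symmetric] mem_AP_set using assms(3) by (auto intro!: exI[of _ 1])
  then obtain j where j: "b + e = b' + real j * e'" unfolding mem_AP_set by auto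
  have "b' + e' \<in> AP_set b e k" unfolding assms(4) mem_AP_set using assms(3) by (auto intro!: exI[of _ 1])
  then obtain j' where j': "b' + e' = b + real j' * e" unfolding mem_AP_set by auto
  have e1: "e = real j * e'" using j bb by simp
  have e2: "e' = real j' * e" using j' bb by simp
  have "j \<noteq> 0" proof assume "j = 0" with e1 assms(1) show False by simp qed
  hence "1 \<le> real j" by simp
  hence "e \<ge> e'" using e1 assms(2) mult_right_mono[of 1 "real j" e'] by simp
  moreover have "j' \<noteq> 0" proof assume "j' = 0" with e2 assms(2) show False by simp qed
  hence "1 \<le> real j'" by simp
  hence "e' \<ge> e" using e2 assms(1) mult_right_mono[of 1 "real j'" e] by simp
  ultimately show ?thesis using bb by simp
qed

lemma S_AP_pairs:
  assumes "2 \<le> k"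
  shows "S_AP k V = card (pairsAP k V)"
proof -
  have "bij_betw (\<lambda>(b,e). AP_set b e k) (pairsAP k V) {P. is_kAP k P \<and> P \<subseteq> V}"
  proof (rule bij_betwI')
    fix x y assume "x \<in> pairsAP k V" "y \<in> pairsAP k V"
    then show "((\<lambda>(b,e). AP_set b e k) x = (\<lambda>(b,e). AP_set b e k) y) = (x = y)"
      using AP_set_inj[OF _ _ assms] unfolding pairsAP_def by (cases x; cases y) auto
  next
    fix x assume "x \<in> pairsAP k V"
    then show "(\<lambda>(b,e). AP_set b e k) x \<in> {P. is_kAP k P \<and> P \<subseteq> V}"
      unfolding pairsAP_def is_kAP_def AP_set_def by (cases x) auto
  next
    fix P assume "P \<in> {P. is_kAP k P \<and> P \<subseteq> V}"
    then obtain b e where "e > 0" "P = AP_set b e k" "P \<subseteq> V" unfolding is_kAP_def by auto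
    then show "\<exists>x\<in>pairsAP k V. P = (\<lambda>(b,e). AP_set b e k) x"
      unfolding pairsAP_def AP_set_def by (auto intro!: bexI[of _ "(b,e)"])
  qed
  then show ?thesis unfolding S_AP_def by (simp add: bij_betw_same_card)
qed

lemma finite_pairsAP:
  assumes "finite V" "2 \<le> k"
  shows "finite (pairsAP k V)"
proof -
  have "pairsAP k V \<subseteq> (\<lambda>(x,y). (x, y - x)) ` (V \<times> V)"
  proof
    fix z assume "z \<in> pairsAP k V"
    then obtain b e where z: "z = (b,e)" "\<forall>j<k. b + real j * e \<in> V" unfolding pairsAP_def by auto
    then have "b \<in> V" "b + e \<in> V" using spec[OF z(2), of 0] spec[OF z(2), of 1] assms(2) by auto
    then show "z \<in> (\<lambda>(x,y). (x, y - x)) ` (V \<times> V)" using z by (auto intro!: image_eqI[of _ _ "(b, b+e)"])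
  qed
  then show ?thesis using assms(1) finite_subset by blast
qed

lemma card_lt_pairs:
  fixes U :: "real set"
  assumes "finite U"
  shows "card {(x,y). x \<in> U \<and> y \<in> U \<and> x < y} = fAP 1 (card U)"
  using assms
proof (induction "card U" arbitrary: U)
  case 0
  then show ?case by (simp add: fAP_def)
next
  case (Suc n)
  then have ne: "U \<noteq> {}" by auto
  define M where "M = Max U"
  have MU: "M \<in> U" using Suc.prems ne unfolding M_def by simp
  have Mmax: "x \<le> M" if "x \<in> U" for x using Suc.prems that unfolding M_def by simp
  define U' where "U' = U - {M}"
  have cU': "card U' = n" using Suc.hyps(2) MU Suc.prems unfolding U'_def by simp
  have fU': "finite U'" using Suc.prems unfolding U'_def by simp
  have eq: "{(x,y). x \<in> U \<and> y \<in> U \<and> x < y} =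
     {(x,y). x \<in> U' \<and> y \<in> U' \<and> x < y} \<union> (\<lambda>x. (x, M)) ` U'"
  proof (rule set_eqI, clarify)
    fix x y
    show "((x, y) \<in> {(x,y). x \<in> U \<and> y \<in> U \<and> x < y}) =
       ((x, y) \<in> {(x,y). x \<in> U' \<and> y \<in> U' \<and> x < y} \<union> (\<lambda>x. (x, M)) ` U')"
    proof
      assume "(x, y) \<in> {(x,y). x \<in> U \<and> y \<in> U \<and> x < y}"
      then have h: "x \<in> U" "y \<in> U" "x < y" by auto
      have "y \<le> M" using Mmax h by simp
      then have "x \<noteq> M" using h by simp
      then have xU': "x \<in> U'" using h unfolding U'_def by simp
      show "(x, y) \<in> {(x,y). x \<in> U' \<and> y \<in> U' \<and> x < y} \<union> (\<lambda>x. (x, M)) ` U'"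
      proof (cases "y = M")
        case True
        then show ?thesis using xU' by auto
      next
        case False
        then show ?thesis using xU' h unfolding U'_def by auto
      qed
    next
      assume "(x, y) \<in> {(x,y). x \<in> U' \<and> y \<in> U' \<and> x < y} \<union> (\<lambda>x. (x, M)) ` U'"
      then show "(x, y) \<in> {(x,y). x \<in> U \<and> y \<in> U \<and> x < y}"
        using Mmax MU unfolding U'_def by (auto simp: order.order_iff_strict)
    qed
  qed
  have disj: "{(x,y). x \<in> U' \<and> y \<in> U' \<and> x < y} \<inter> (\<lambda>x. (x, M)) ` U' = {}"
    unfolding U'_def by auto
  have fin1: "finite {(x,y). x \<in> U' \<and> y \<in> U' \<and> x < y}"
    by (rule finite_subset[of _ "U' \<times> U'"]) (use fU' in auto)
  have "card {(x,y). x \<in> U \<and> y \<in> U \<and> x < y} =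
        card {(x,y). x \<in> U' \<and> y \<in> U' \<and> x < y} + card ((\<lambda>x. (x, M)) ` U')"
    unfolding eq by (rule card_Un_disjoint[OF fin1 _ disj]) (use fU' in simp)
  also have "card ((\<lambda>x. (x, M)) ` U') = n" using cU' by (simp add: card_image inj_on_def)
  also have "card {(x,y). x \<in> U' \<and> y \<in> U' \<and> x < y} = fAP 1 n"
    using Suc.hyps(1)[of U'] cU' fU' by simp
  finally show ?case using Suc.hyps(2)[symmetric] by (simp add: fAP_Suc)
qed

lemma split_lower:
  fixes W :: "real set"
  assumes "finite W" "m \<le> card W"
  shows "\<exists>L \<subseteq> W. card L = m \<and> (\<forall>x\<in>L. \<forall>y\<in>W-L. x < y)"
  using assms
proof (induction "card W" arbitrary: W)
  case 0
  then show ?case by auto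
next
  case (Suc n)
  show ?case
  proof (cases "m = card W")
    case True
    then show ?thesis by auto
  next
    case False
    then have ne: "W \<noteq> {}" using Suc by auto
    define M where "M = Max W"
    have MW: "M \<in> W" using Suc.prems ne unfolding M_def by simp
    have Mmax: "x \<le> M" if "x \<in> W" for x using Suc.prems that unfolding M_def by simp
    have c: "card (W - {M}) = n" using Suc.hyps(2) MW Suc.prems by simp
    obtain L where L: "L \<subseteq> W - {M}" "card L = m" "\<forall>x\<in>L. \<forall>y\<in>(W - {M})-L. x < y"
      using Suc.hyps(1)[of "W - {M}"] c Suc.prems False Suc.hyps(2) by auto
    have "\<forall>x\<in>L. \<forall>y\<in>W-L. x < y"
    proof (intro ballI)
      fix x y assume "x \<in> L" "y \<in> W - L"
      then show "x < y"
      proof (cases "y = M")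
        case True
        then show ?thesis using \<open>x \<in> L\<close> L(1) Mmax by force
      next
        case False
        then show ?thesis using \<open>x \<in> L\<close> \<open>y \<in> W - L\<close> L(3) by auto
      qed
    qed
    then show ?thesis using L by auto
  qed
qed

lemma div_help: "0 < (s::nat) \<Longrightarrow> r < s \<Longrightarrow> (q * s + r) div s = q"
  by simp

lemma arith_split:
  assumes "2 \<le> s"
  shows "(n + s - 1) div s \<le> n \<and>
    fAP (s-1) (n - (n + s - 1) div s) + fAP 1 ((n + s - 1) div s) = fAP s n"
proof (induction n)
  case 0
  then show ?case using assms by (simp add: fAP_def)
next
  case (Suc n)
  define c where "c = (n + s - 1) div s"
  have IH: "c \<le> n" "fAP (s-1) (n - c) + fAP 1 c = fAP s n" using Suc.IH unfolding c_def by auto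
  have sp: "0 < s" using assms by simp
  obtain q r where qr: "n = q * s + r" "r < s" using sp
    by (metis div_mult_mod_eq mod_less_divisor)
  show ?case
  proof (cases "r = 0")
    case True
    have c: "c = q" unfolding c_def qr True using assms div_help[of s "s - 1" q] by simp
    have c': "(Suc n + s - 1) div s = Suc q" unfolding qr True using assms div_help[of s 0 "Suc q"]
      by (simp add: add.commute)
    have "Suc n - Suc q = n - c" using c IH by simp
    moreover have "n div s = q" using qr True sp by simp
    ultimately show ?thesis using IH c c' by (simp add: fAP_Suc)
  next
    case False
    have c: "c = Suc q" unfolding c_def qr using assms False div_help[of s "r - 1" "Suc q"] qr(2)
      by (simp add: algebra_simps)
    have c': "(Suc n + s - 1) div s = Suc q" unfolding qr using assms False div_help[of s "r" "Suc q"] qr(2)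
      by (simp add: algebra_simps)
    have nc: "n - c = q * (s - 1) + (r - 1)" using c qr False assms by (simp add: algebra_simps diff_mult_distrib2)
    have d1: "(n - c) div (s - 1) = q" unfolding nc using div_help[of "s-1" "r-1" q] qr(2) assms False by simp
    have d2: "n div s = q" using qr sp by simp
    have "Suc n - Suc q = Suc (n - c)" using c IH qr False by simp
    then show ?thesis using IH c c' d1 d2 by (simp add: fAP_Suc)
  qed
qed

lemma pairs_to_lt:
  fixes U :: "real set"
  assumes "finite U" "Z \<subseteq> pairsAP (Suc k) W" "\<forall>z\<in>Z. fst z + real (k-1) * snd z \<in> U \<and> fst z + real k * snd z \<in> U"
    "1 \<le> k"
  shows "card Z \<le> fAP 1 (card U)"
proof -
  let ?g = "\<lambda>(b,e). (b + real (k-1) * e, b + real k * e)"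
  have inj: "inj_on ?g Z"
  proof (rule inj_onI)
    fix x y assume "x \<in> Z" "y \<in> Z" and eq0: "?g x = ?g y"
    obtain b e b' e' where xy: "x = (b,e)" "y = (b',e')" by (cases x, cases y) auto
    have eq: "?g (b,e) = ?g (b',e')" using eq0 xy by simp
    then have h1: "b + real (k-1) * e = b' + real (k-1) * e'" and h2: "b + real k * e = b' + real k * e'" by auto
    have "real k * e - real (k-1) * e = real k * e' - real (k-1) * e'" using h1 h2 by linarith
    moreover have "real k * x - real (k-1) * x = x" if "k \<ge> 1" for x using that by (simp add: of_nat_diff algebra_simps)
    moreover note assms(4)
    ultimately have "e = e'" by simp
    then show "x = y" using h1 xy by simp
  qed
  have sub: "?g ` Z \<subseteq> {(x,y). x \<in> U \<and> y \<in> U \<and> x < y}"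
  proof clarify
    fix b e assume "(b,e) \<in> Z"
    then have "e > 0" using assms(2) unfolding pairsAP_def by auto
    then have "b + real (k-1) * e < b + real k * e" using assms(4) by (simp add: mult_strict_right_mono)
    then show "b + real (k-1) * e \<in> U \<and> b + real k * e \<in> U \<and> b + real (k-1) * e < b + real k * e"
      using assms(3) \<open>(b,e) \<in> Z\<close> by auto
  qed
  have fin: "finite {(x,y). x \<in> U \<and> y \<in> U \<and> x < y}"
    by (rule finite_subset[of _ "U \<times> U"]) (use assms(1) in auto)
  have "card Z = card (?g ` Z)" using inj by (simp add: card_image)
  also have "\<dots> \<le> card {(x,y). x \<in> U \<and> y \<in> U \<and> x < y}" by (rule card_mono[OF fin sub])
  also have "\<dots> = fAP 1 (card U)" by (rule card_lt_pairs[OF assms(1)])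
  finally show ?thesis .
qed

lemma pairs_bound:
  assumes "2 \<le> k"
  shows "finite W \<Longrightarrow> card (pairsAP k W) \<le> fAP (k-1) (card W)"
  using assms
proof (induction k arbitrary: W rule: nat_induct_at_least)
  case base
  have "card (pairsAP (Suc 1) W) \<le> fAP 1 (card W)"
    by (rule pairs_to_lt[OF base(1) subset_refl]) (auto simp: pairsAP_def)
  then show ?case by (simp add: numeral_2_eq_2)
next
  case (Suc k)
  note fW = Suc.prems(1)
  define n where "n = card W"
  define c where "c = (n + k - 1) div k"
  have ar: "c \<le> n" "fAP (k-1) (n - c) + fAP 1 c = fAP k n"
    using arith_split[OF Suc.hyps(1), of n] unfolding c_def by auto
  obtain L where L: "L \<subseteq> W" "card L = n - c" "\<forall>x\<in>L. \<forall>y\<in>W-L. x < y"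
    using split_lower[OF fW, of "n - c"] unfolding n_def by auto
  have fL: "finite L" using L(1) fW finite_subset by blast
  have cWL: "card (W - L) = c" using L fL fW ar(1) unfolding n_def by (simp add: card_Diff_subset)
  have downL: "y \<in> L" if "y \<in> W" "y \<le> x" "x \<in> L" for x y
  proof (rule ccontr)
    assume "y \<notin> L"
    then have "y \<in> W - L" using that by simp
    then have "x < y" using L(3) that(3) by blast
    then show False using that(2) by simp
  qed
  define g1 where "g1 = {z \<in> pairsAP (Suc k) W. fst z + real (k-1) * snd z \<in> L}"
  define g2 where "g2 = {z \<in> pairsAP (Suc k) W. fst z + real (k-1) * snd z \<notin> L}"
  have un: "pairsAP (Suc k) W = g1 \<union> g2" unfolding g1_def g2_def by auto
  have g1sub: "g1 \<subseteq> pairsAP k L"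
  proof
    fix z assume z: "z \<in> g1"
    obtain b e where be: "z = (b,e)" by (cases z)
    have e: "e > 0" and all: "\<forall>j<Suc k. b + real j * e \<in> W" and top: "b + real (k-1) * e \<in> L"
      using z be unfolding g1_def pairsAP_def by auto
    have "b + real j * e \<in> L" if "j < k" for j
    proof (rule downL[OF _ _ top])
      show "b + real j * e \<in> W" using all that by simp
      have "real j \<le> real (k-1)" using that by simp
      then show "b + real j * e \<le> b + real (k-1) * e" using e by (simp add: mult_right_mono)
    qed
    then show "z \<in> pairsAP k L" using be e unfolding pairsAP_def by auto
  qed
  have "card g1 \<le> card (pairsAP k L)"
    by (rule card_mono[OF finite_pairsAP[OF fL Suc.hyps(1)] g1sub])
  also have "\<dots> \<le> fAP (k-1) (n - c)" using Suc.IH[OF fL] L(2) by simp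
  finally have c1: "card g1 \<le> fAP (k-1) (n - c)" .
  have "card g2 \<le> fAP 1 (card (W - L))"
  proof (rule pairs_to_lt)
    show "finite (W - L)" using fW by simp
    show "g2 \<subseteq> pairsAP (Suc k) W" unfolding g2_def by auto
    show "1 \<le> k" using Suc.hyps by simp
    show "\<forall>z\<in>g2. fst z + real (k - 1) * snd z \<in> W - L \<and> fst z + real k * snd z \<in> W - L"
    proof
      fix z assume z: "z \<in> g2"
      obtain b e where be: "z = (b,e)" by (cases z)
      have e: "e > 0" and all: "\<forall>j<Suc k. b + real j * e \<in> W" and top: "b + real (k-1) * e \<notin> L"
        using z be unfolding g2_def pairsAP_def by auto
      have "k - 1 < Suc k" by simp
      then have w1: "b + real (k-1) * e \<in> W" using all by blast
      have w2: "b + real k * e \<in> W" using all by simp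
      have "b + real (k-1) * e \<le> b + real k * e" using e by (simp add: mult_right_mono)
      then have "b + real k * e \<notin> L" using downL[OF w1] top by blast
      then show "fst z + real (k - 1) * snd z \<in> W - L \<and> fst z + real k * snd z \<in> W - L"
        using be w1 w2 top by simp
    qed
  qed
  then have c2: "card g2 \<le> fAP 1 c" using cWL by simp
  have "card (pairsAP (Suc k) W) \<le> card g1 + card g2" unfolding un by (rule card_Un_le)
  also have "\<dots> \<le> fAP k n" using c1 c2 ar(2) by simp
  finally show ?case unfolding n_def by simp
qed

lemma S_AP_bound:
  assumes "2 \<le> k" "finite W"
  shows "S_AP k W \<le> fAP (k-1) (card W)"
  using pairs_bound[OF assms(1,2)] S_AP_pairs[OF assms(1)] by simp

lemma idx_inj: "(d::real) \<noteq> 0 \<Longrightarrow> a + real x * d = a + real y * d \<Longrightarrow> x = y"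
  by simp

lemma mem_idx:
  assumes "(d::real) > 0"
  shows "a + real x * d \<in> AP_set a d N - (\<lambda>i. a + real i * d) ` I \<longleftrightarrow> x < N \<and> x \<notin> I"
proof -
  have 1: "a + real x * d \<in> AP_set a d N \<longleftrightarrow> x < N" using assms by (auto simp: mem_AP_set)
  have 2: "a + real x * d \<in> (\<lambda>i. a + real i * d) ` I \<longleftrightarrow> x \<in> I" using assms by auto
  show ?thesis using 1 2 by blast
qed

lemma mem_idx_ex:
  assumes "y \<in> AP_set a d N - (\<lambda>i. a + real i * d) ` I"
  shows "\<exists>x. y = a + real x * d"
  using assms by (auto simp: mem_AP_set)

lemma pairs_index:
  assumes "d > 0" "2 \<le> k"
  shows "card (pairsAP k (AP_set a d N - (\<lambda>i. a + real i * d) ` I)) = card (ipairs k N I)"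
proof -
  let ?V = "AP_set a d N - (\<lambda>i. a + real i * d) ` I"
  let ?h = "\<lambda>(i::nat,t::nat). (a + real i * d, real t * d)"
  have key: "a + real i * d + real j * (real t * d) = a + real (i + j * t) * d" for i j t :: nat
    by (simp add: algebra_simps)
  have "bij_betw ?h (ipairs k N I) (pairsAP k ?V)"
  proof (rule bij_betwI')
    fix x y assume "x \<in> ipairs k N I" "y \<in> ipairs k N I"
    then show "(?h x = ?h y) = (x = y)" using assms(1) by (cases x; cases y) auto
  next
    fix x assume x: "x \<in> ipairs k N I"
    obtain i t where it: "x = (i,t)" by (cases x)
    have t: "0 < t" and all: "\<forall>j<k. i + j*t < N \<and> i + j*t \<notin> I" using x it unfolding ipairs_def by auto
    have "a + real i * d + real j * (real t * d) \<in> ?V" if "j<k" for j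
      unfolding key using mem_idx[OF assms(1)] all that by blast
    moreover have "0 < real t * d" using t assms(1) by simp
    ultimately show "?h x \<in> pairsAP k ?V" unfolding pairsAP_def it mem_Collect_eq case_prod_conv
      by blast
  next
    fix z assume z: "z \<in> pairsAP k ?V"
    obtain b e where be: "z = (b,e)" by (cases z)
    have e: "e > 0" and all: "\<forall>j<k. b + real j * e \<in> ?V" using z be unfolding pairsAP_def by auto
    have "b \<in> ?V" using spec[OF all, of 0] assms(2) by simp
    then obtain i where i: "b = a + real i * d" using mem_idx_ex by blast
    have "b + e \<in> ?V" using spec[OF all, of 1] assms(2) by simp
    then obtain i' where i': "b + e = a + real i' * d" using mem_idx_ex by blast
    have ediff: "e = (real i' - real i) * d" using i i' by (simp add: algebra_simps)
    then have "real i' - real i > 0" using e assms(1) by (simp add: zero_less_mult_iff)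
    then have ii: "i < i'" by simp
    define t where "t = i' - i"
    have et: "e = real t * d" using ediff ii unfolding t_def by (simp add: of_nat_diff)
    have tp: "0 < t" using ii unfolding t_def by simp
    have "i + j*t < N \<and> i + j*t \<notin> I" if "j < k" for j
    proof -
      have "b + real j * e \<in> ?V" using all that by simp
      then have "a + real (i + j*t) * d \<in> ?V" unfolding i et key .
      then show ?thesis using mem_idx[OF assms(1)] by blast
    qed
    then have "(i,t) \<in> ipairs k N I" using tp unfolding ipairs_def by auto
    moreover have "z = ?h (i,t)" using be i et by simp
    ultimately show "\<exists>x\<in>ipairs k N I. z = ?h x" by blast
  qed
  then show ?thesis by (simp add: bij_betw_same_card)
qed



lemma ipairs_mem:
  "(i,t) \<in> ipairs (Suc s) N I \<longleftrightarrow> 0 < t \<and> i + s*t < N \<and> (\<forall>j\<le>s. i + j*t \<notin> I)"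
proof
  assume "(i,t) \<in> ipairs (Suc s) N I"
  then show "0 < t \<and> i + s*t < N \<and> (\<forall>j\<le>s. i + j*t \<notin> I)" unfolding ipairs_def by auto
next
  assume h: "0 < t \<and> i + s*t < N \<and> (\<forall>j\<le>s. i + j*t \<notin> I)"
  have "i + j*t < N" if "j \<le> s" for j
  proof -
    have "j*t \<le> s*t" using that by simp
    then show ?thesis using h by linarith
  qed
  then show "(i,t) \<in> ipairs (Suc s) N I" using h unfolding ipairs_def by auto
qed

lemma card_top:
  assumes "0 < s"
  shows "card {(i,t). 0 < t \<and> i + s*t = N} = N div s"
proof -
  have eq: "{(i,t). 0 < t \<and> i + s*t = N} = (\<lambda>t. (N - s*t, t)) ` {1..N div s}"
  proof
    show "{(i,t). 0 < t \<and> i + s*t = N} \<subseteq> (\<lambda>t. (N - s*t, t)) ` {1..N div s}"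
    proof
      fix x assume x: "x \<in> {(i,t). 0 < t \<and> i + s*t = N}"
      obtain i t where it: "x = (i,t)" by (cases x)
      have h: "0 < t" "i + s*t = N" using x it by auto
      then have "t * s \<le> N" by (simp add: mult.commute)
      then have "t \<le> N div s" using assms by (simp add: less_eq_div_iff_mult_less_eq)
      moreover have "i = N - s*t" using h by simp
      ultimately show "x \<in> (\<lambda>t. (N - s*t, t)) ` {1..N div s}" using h it
        by (intro image_eqI[of _ _ t]) auto
    qed
    show "(\<lambda>t. (N - s*t, t)) ` {1..N div s} \<subseteq> {(i,t). 0 < t \<and> i + s*t = N}"
    proof
      fix x assume "x \<in> (\<lambda>t. (N - s*t, t)) ` {1..N div s}"
      then obtain u where u: "u \<in> {1..N div s}" "x = (N - s*u, u)" by auto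
      have "u * s \<le> N" using u assms by (simp add: less_eq_div_iff_mult_less_eq)
      then show "x \<in> {(i,t). 0 < t \<and> i + s*t = N}" using u by (simp add: mult.commute)
    qed
  qed
  have "inj_on (\<lambda>t. (N - s*t, t)) {1..N div s}" by (auto simp: inj_on_def)
  then show ?thesis unfolding eq by (simp add: card_image)
qed

lemma finite_ipairs: "0 < s \<Longrightarrow> finite (ipairs (Suc s) N I)"
proof -
  assume s: "0 < s"
  have "ipairs (Suc s) N I \<subseteq> {..<N} \<times> {..<N}"
  proof
    fix x assume x: "x \<in> ipairs (Suc s) N I"
    obtain i t where it: "x = (i,t)" by (cases x)
    have "0 < t" "i + s*t < N" using x it ipairs_mem by auto
    moreover have "t \<le> s * t" using s by simp
    ultimately have "i < N" "t < N" by linarith+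
    then show "x \<in> {..<N} \<times> {..<N}" using it by simp
  qed
  then show ?thesis using finite_subset by blast
qed

lemma card_ipairs_full:
  assumes "0 < s"
  shows "card (ipairs (Suc s) N {}) = fAP s N"
proof (induction N)
  case 0
  have "ipairs (Suc s) 0 {} = {}" unfolding ipairs_def by auto
  then show ?case by (simp add: fAP_def)
next
  case (Suc N)
  have eq: "ipairs (Suc s) (Suc N) {} = ipairs (Suc s) N {} \<union> {(i,t). 0 < t \<and> i + s*t = N}"
    by (auto simp: ipairs_mem)
  have disj: "ipairs (Suc s) N {} \<inter> {(i,t). 0 < t \<and> i + s*t = N} = {}"
    by (auto simp: ipairs_mem)
  have fin2: "finite {(i,t). 0 < t \<and> i + s*t = N}"
  proof -
    have "{(i,t). 0 < t \<and> i + s*t = N} \<subseteq> ipairs (Suc s) (Suc N) {}" using eq by blast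
    then show ?thesis using finite_ipairs[OF assms] finite_subset by blast
  qed
  have "card (ipairs (Suc s) (Suc N) {}) = card (ipairs (Suc s) N {}) + card {(i,t). 0 < t \<and> i + s*t = N}"
    unfolding eq by (rule card_Un_disjoint[OF finite_ipairs[OF assms] fin2 disj])
  then show ?case using Suc.IH card_top[OF assms] by (simp add: fAP_Suc)
qed

lemma hit_split:
  assumes "0 < s"
  shows "card (ipairs (Suc s) N I) + card (ipairs (Suc s) N {} - ipairs (Suc s) N I) = fAP s N"
proof -
  have sub: "ipairs (Suc s) N I \<subseteq> ipairs (Suc s) N {}" unfolding ipairs_def by auto
  have "card (ipairs (Suc s) N {} - ipairs (Suc s) N I) = card (ipairs (Suc s) N {}) - card (ipairs (Suc s) N I)"
    by (rule card_Diff_subset[OF finite_subset[OF sub finite_ipairs[OF assms]] sub])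
  moreover have "card (ipairs (Suc s) N I) \<le> card (ipairs (Suc s) N {})"
    by (rule card_mono[OF finite_ipairs[OF assms] sub])
  ultimately show ?thesis using card_ipairs_full[OF assms] by simp
qed

lemma R1_hits:
  assumes "0 < s" "s \<le> n"
  shows "ipairs (Suc s) (Suc n) {} - ipairs (Suc s) (Suc n) {1} =
         (\<lambda>t. (1::nat,t)) ` {1..(n-1) div s} \<union> {(0::nat,1::nat)}"
proof
  show "ipairs (Suc s) (Suc n) {} - ipairs (Suc s) (Suc n) {1} \<subseteq> (\<lambda>t. (1::nat,t)) ` {1..(n-1) div s} \<union> {(0::nat,1::nat)}"
  proof
    fix x assume x: "x \<in> ipairs (Suc s) (Suc n) {} - ipairs (Suc s) (Suc n) {1}"
    obtain i t where it: "x = (i,t)" by (cases x)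
    have h: "0 < t" "i + s*t < Suc n" and "\<exists>j\<le>s. i + j*t = 1" using x it by (auto simp: ipairs_mem)
    then obtain j where j: "j \<le> s" "i + j*t = 1" by auto
    show "x \<in> (\<lambda>t. (1::nat,t)) ` {1..(n-1) div s} \<union> {(0::nat,1::nat)}"
    proof (cases "j = 0")
      case True
      then have i1: "i = 1" using j by simp
      then have "t * s \<le> n - 1" using h by (simp add: mult.commute)
      then have "t \<le> (n-1) div s" using assms(1) by (simp add: less_eq_div_iff_mult_less_eq)
      then show ?thesis using i1 it h by auto
    next
      case False
      then have "j * t \<ge> 1" using h(1) by simp
      then have "i = 0" "j * t = 1" using j by linarith+
      then have "t = 1" by simp
      then show ?thesis using it \<open>i = 0\<close> by simp
    qed
  qed
  show "(\<lambda>t. (1::nat,t)) ` {1..(n-1) div s} \<union> {(0::nat,1::nat)} \<subseteq> ipairs (Suc s) (Suc n) {} - ipairs (Suc s) (Suc n) {1}"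
  proof
    fix x assume x: "x \<in> (\<lambda>t. (1::nat,t)) ` {1..(n-1) div s} \<union> {(0::nat,1::nat)}"
    show "x \<in> ipairs (Suc s) (Suc n) {} - ipairs (Suc s) (Suc n) {1}"
    proof (cases "x = (0::nat,1::nat)")
      case True
      have "0 + 1 * 1 = (1::nat)" by simp
      then show ?thesis using True assms by (auto simp: ipairs_mem)
    next
      case False
      then obtain t where t: "x = (1,t)" "t \<in> {1..(n-1) div s}" using x by auto
      have "t * s \<le> n - 1" using t(2) assms(1) by (simp add: less_eq_div_iff_mult_less_eq)
      then have "1 + s * t < Suc n" using assms by (simp add: mult.commute)
      then show ?thesis using t by (auto simp: ipairs_mem)
    qed
  qed
qed

lemma R1_count:
  assumes "0 < s" "s \<le> n"
  shows "card (ipairs (Suc s) (Suc n) {1}) + (n-1) div s + 1 = fAP s n + n div s"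
proof -
  have "card ((\<lambda>t. (1::nat,t)) ` {1..(n-1) div s} \<union> {(0,1)}) = (n-1) div s + 1"
  proof -
    have "(0::nat,1::nat) \<notin> (\<lambda>t. (1,t)) ` {1..(n-1) div s}" by auto
    moreover have "card ((\<lambda>t. (1::nat,t)) ` {1..(n-1) div s}) = (n-1) div s"
      by (simp add: card_image inj_on_def)
    ultimately show ?thesis by simp
  qed
  then show ?thesis using hit_split[OF assms(1), of "Suc n" "{1}"] R1_hits[OF assms] by (simp add: fAP_Suc)
qed

lemma div_pred: "0 < (n::nat) \<Longrightarrow> n div s = (n-1) div s + (if s dvd n then 1 else 0)"
proof -
  assume "0 < n"
  then obtain m where m: "n = Suc m" by (cases n) auto
  show ?thesis unfolding m using div_Suc[of m s] by (auto simp: dvd_eq_mod_eq_0)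
qed

lemma R1_dvd:
  assumes "0 < s" "s \<le> n" "s dvd n"
  shows "card (ipairs (Suc s) (Suc n) {1}) = fAP s n"
  using R1_count[OF assms(1,2)] div_pred[of n s] assms by simp

lemma R1_ndvd:
  assumes "0 < s" "s \<le> n" "\<not> s dvd n"
  shows "card (ipairs (Suc s) (Suc n) {1}) < fAP s n"
  using R1_count[OF assms(1,2)] div_pred[of n s] assms by simp

lemma R2_count:
  assumes "3 \<le> s" "Suc s \<le> n"
  shows "card (ipairs (Suc s) (Suc (Suc n)) {1, n}) < fAP s n"
proof -
  have s0: "0 < s" using assms by simp
  define q where "q = n div s"
  define Ga where "Ga = (\<lambda>t. (1::nat,t)) ` {1..q}"
  define T where "T = {t \<in> {1..q}. n - s*t \<noteq> 1}"
  define Gb where "Gb = (\<lambda>t. (n - s*t, t)) ` T"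
  define Gc where "Gc = {(0::nat,1::nat), (n + 1 - s, 1)}"
  define Hit where "Hit = ipairs (Suc s) (Suc (Suc n)) {} - ipairs (Suc s) (Suc (Suc n)) {1, n}"
  have tq: "t * s \<le> n" if "t \<in> {1..q}" for t
    using that s0 unfolding q_def by (simp add: less_eq_div_iff_mult_less_eq)
  have "Ga \<subseteq> Hit"
  proof
    fix x assume "x \<in> Ga"
    then obtain t where t: "x = (1,t)" "t \<in> {1..q}" unfolding Ga_def by auto
    have "1 + s*t < Suc (Suc n)" using tq[OF t(2)] by (simp add: mult.commute)
    moreover have "1 + 0*t \<in> {1,n}" by simp
    ultimately show "x \<in> Hit" unfolding Hit_def using t by (auto simp: ipairs_mem)
  qed
  moreover have "Gb \<subseteq> Hit"
  proof
    fix x assume "x \<in> Gb"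
    then obtain t where t: "x = (n - s*t,t)" "t \<in> {1..q}" unfolding Gb_def T_def by auto
    have e: "n - s*t + s*t = n" using tq[OF t(2)] by (simp add: mult.commute)
    then have "n - s*t + s*t < Suc (Suc n)" by simp
    moreover have "n - s*t + s*t \<in> {1,n}" using e by simp
    ultimately show "x \<in> Hit" unfolding Hit_def using t by (auto simp: ipairs_mem)
  qed
  moreover have "Gc \<subseteq> Hit"
  proof -
    have "(0::nat,1::nat) \<in> Hit" unfolding Hit_def using assms
      by (auto simp: ipairs_mem intro!: exI[of _ 1])
    moreover have "(n + 1 - s, 1) \<in> Hit"
    proof -
      have "n + 1 - s + (s - 1) * 1 = n" using assms by simp
      moreover have "s - 1 \<le> s" by simp
      moreover have "n + 1 - s + s * 1 < Suc (Suc n)" using assms by simp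
      ultimately have "(n + 1 - s, 1) \<notin> ipairs (Suc s) (Suc (Suc n)) {1,n}"
        unfolding ipairs_mem by (metis insertI2 singletonI)
      moreover have "(n + 1 - s, 1) \<in> ipairs (Suc s) (Suc (Suc n)) {}"
        using assms by (simp add: ipairs_mem)
      ultimately show ?thesis unfolding Hit_def by blast
    qed
    ultimately show ?thesis unfolding Gc_def by auto
  qed
  ultimately have GH: "Ga \<union> Gb \<union> Gc \<subseteq> Hit" by blast
  have finH: "finite Hit" unfolding Hit_def using finite_ipairs[OF s0] by blast
  have d1: "Ga \<inter> Gb = {}" unfolding Ga_def Gb_def T_def by auto
  have d2: "(Ga \<union> Gb) \<inter> Gc = {}"
  proof -
    have "n + 1 - s \<noteq> 1" using assms by simp
    moreover have "n - s \<noteq> 0" using assms by simp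
    moreover have "n - s \<noteq> n + 1 - s" using assms by simp
    ultimately show ?thesis unfolding Ga_def Gb_def Gc_def T_def by auto
  qed
  have cGa: "card Ga = q" unfolding Ga_def by (simp add: card_image inj_on_def)
  have cGb: "card Gb = card T" unfolding Gb_def by (rule card_image) (auto simp: inj_on_def)
  have cGc: "card Gc = 2"
  proof -
    have "n + 1 - s \<noteq> 0" using assms by simp
    then show ?thesis unfolding Gc_def by simp
  qed
  have finG: "finite Ga" "finite Gb" "finite Gc" unfolding Ga_def Gb_def Gc_def T_def by auto
  have "card (Ga \<union> Gb \<union> Gc) = q + card T + 2"
    using card_Un_disjoint[OF _ _ d1] card_Un_disjoint[OF _ _ d2] finG cGa cGb cGc by simp
  moreover have "card (Ga \<union> Gb \<union> Gc) \<le> card Hit" by (rule card_mono[OF finH GH])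
  moreover have "card (ipairs (Suc s) (Suc (Suc n)) {1, n}) + card Hit = fAP s n + n div s + Suc n div s"
    using hit_split[OF s0, of "Suc (Suc n)" "{1,n}"] unfolding Hit_def by (simp add: fAP_Suc)
  ultimately have main: "card (ipairs (Suc s) (Suc (Suc n)) {1, n}) + q + card T + 2 \<le> fAP s n + q + Suc n div s"
    unfolding q_def by linarith
  have sucdiv: "Suc n div s \<le> q + 1" unfolding q_def using div_Suc[of n s] by simp
  show ?thesis
  proof (cases "s dvd (n - 1)")
    case True
    then obtain r where r: "n - 1 = s * r" by auto
    have n1: "n = r * s + 1" using r assms by (simp add: mult.commute)
    have "q = r" unfolding q_def n1 using div_help[of s 1 r] assms by simp
    moreover have "Suc n div s = r" unfolding n1 using div_help[of s 2 r] assms by simp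
    moreover have "card T \<ge> q - 1"
    proof -
      have "{1..q} - {(n-1) div s} \<subseteq> T"
      proof
        fix t assume t: "t \<in> {1..q} - {(n-1) div s}"
        have "n - s*t \<noteq> 1"
        proof
          assume "n - s*t = 1"
          then have "s * t = n - 1" using tq[of t] t by (simp add: mult.commute)
          then have "t = (n-1) div s" using s0 by (metis nonzero_mult_div_cancel_left not_gr0)
          then show False using t by simp
        qed
        then show "t \<in> T" unfolding T_def using t by simp
      qed
      then have "card ({1..q} - {(n-1) div s}) \<le> card T" by (rule card_mono[rotated]) (simp add: T_def)
      moreover have "card ({1..q} - {(n-1) div s}) \<ge> q - 1" by (simp add: card_Diff_singleton_if)
      ultimately show ?thesis by linarith
    qed
    ultimately show ?thesis using main by linarith
  next
    case False
    have "T = {1..q}"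
    proof -
      have "n - s*t \<noteq> 1" if "t \<in> {1..q}" for t
      proof
        assume "n - s*t = 1"
        then have "s * t = n - 1" using tq[OF that] by (simp add: mult.commute)
        then show False using False by (metis dvd_triv_left)
      qed
      then show ?thesis unfolding T_def by auto
    qed
    then have "card T = q" by simp
    then show ?thesis using main sucdiv by linarith
  qed
qed



lemma pairs_reflect_le:
  assumes "finite V" "2 \<le> k"
  shows "card (pairsAP k V) \<le> card (pairsAP k ((\<lambda>x. c - x) ` V))"
proof -
  let ?r = "\<lambda>(b::real,e::real). (c - b - real (k-1) * e, e)"
  have inj: "inj_on ?r (pairsAP k V)" by (auto simp: inj_on_def)
  have sub: "?r ` pairsAP k V \<subseteq> pairsAP k ((\<lambda>x. c - x) ` V)"
  proof
    fix z assume "z \<in> ?r ` pairsAP k V"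
    then obtain b e where be: "(b,e) \<in> pairsAP k V" "z = ?r (b,e)" by auto
    have e: "0 < e" and all: "\<forall>j<k. b + real j * e \<in> V" using be(1) unfolding pairsAP_def by auto
    have "c - b - real (k-1) * e + real j * e \<in> (\<lambda>x. c - x) ` V" if "j < k" for j
    proof -
      have "k - 1 - j < k" using that by simp
      then have inV: "b + real (k - 1 - j) * e \<in> V" using all by blast
      have h: "real (k - 1 - j) = real (k-1) - real j" using that by (simp add: of_nat_diff)
      have "c - b - real (k-1) * e + real j * e = c - (b + (real (k-1) - real j) * e)"
        by (simp add: algebra_simps)
      then have "c - b - real (k-1) * e + real j * e = c - (b + real (k - 1 - j) * e)"
        unfolding h .
      then show ?thesis using inV by (metis image_eqI)
    qed
    then show "z \<in> pairsAP k ((\<lambda>x. c - x) ` V)" using be(2) e unfolding pairsAP_def by auto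
  qed
  have "card (pairsAP k V) = card (?r ` pairsAP k V)" using inj by (simp add: card_image)
  also have "\<dots> \<le> card (pairsAP k ((\<lambda>x. c - x) ` V))"
    by (rule card_mono[OF finite_pairsAP[OF _ assms(2)] sub]) (use assms(1) in simp)
  finally show ?thesis .
qed

lemma S_AP_reflect:
  assumes "finite V" "2 \<le> k"
  shows "S_AP k ((\<lambda>x. c - x) ` V) = S_AP k V"
proof -
  have "(\<lambda>x. c - x) ` (\<lambda>x. c - x) ` V = V" by (auto simp: image_image image_iff)
  then have "card (pairsAP k ((\<lambda>x. c - x) ` V)) \<le> card (pairsAP k V)"
    using pairs_reflect_le[of "(\<lambda>x. c - x) ` V" k c] assms by simp
  moreover have "card (pairsAP k V) \<le> card (pairsAP k ((\<lambda>x. c - x) ` V))"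
    by (rule pairs_reflect_le[OF assms])
  ultimately show ?thesis using S_AP_pairs[OF assms(2)] by simp
qed

lemma AP_set_image: "AP_set a d N = (\<lambda>i. a + real i * d) ` {..<N}"
  unfolding AP_set_def by auto

lemma card_AP_diff:
  assumes "(d::real) > 0" "I \<subseteq> {..<N}"
  shows "card (AP_set a d N - (\<lambda>i. a + real i * d) ` I) = N - card I"
proof -
  have inj: "inj_on (\<lambda>i. a + real i * d) UNIV" using assms(1) by (auto simp: inj_on_def)
  have "AP_set a d N - (\<lambda>i. a + real i * d) ` I = (\<lambda>i. a + real i * d) ` ({..<N} - I)"
    unfolding AP_set_image using inj by (simp add: image_set_diff)
  moreover have "card ((\<lambda>i. a + real i * d) ` ({..<N} - I)) = card ({..<N} - I)"
    by (rule card_image) (use inj in \<open>auto simp: inj_on_def\<close>)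
  moreover have "card ({..<N} - I) = N - card I"
    using assms(2) by (simp add: card_Diff_subset finite_subset)
  ultimately show ?thesis by simp
qed

lemma finite_AP_diff: "finite (AP_set a d N - X)"
  unfolding AP_set_image by simp

lemma S_AP_index:
  assumes "(d::real) > 0" "0 < s"
  shows "S_AP (Suc s) (AP_set a d N - (\<lambda>i. a + real i * d) ` I) = card (ipairs (Suc s) N I)"
  using S_AP_pairs[of "Suc s"] pairs_index[OF assms(1), of "Suc s"] assms by simp

lemma optimal_cong:
  assumes "finite X" "finite Y" "card X = card Y" "S_AP k X = S_AP k Y"
  shows "optimal_AP k n X = optimal_AP k n Y"
  using assms unfolding optimal_AP_def by simp

lemma refl_idx:
  assumes "i < (m::nat)"
  shows "2*a + real (m-1) * d - (a + real i * d) = a + real (m - 1 - i) * d"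
proof -
  have h: "real (m - 1 - i) = real (m-1) - real i" using assms by (simp add: of_nat_diff)
  have "2*a + real (m-1) * d - (a + real i * d) = a + (real (m-1) - real i) * d"
    by (simp add: algebra_simps)
  then show ?thesis unfolding h .
qed

lemma refl_AP:
  "(\<lambda>x. 2*a + real (m-1) * d - x) ` AP_set a d m = AP_set a d m"
proof
  show "(\<lambda>x. 2*a + real (m-1) * d - x) ` AP_set a d m \<subseteq> AP_set a d m"
  proof
    fix y assume "y \<in> (\<lambda>x. 2*a + real (m-1) * d - x) ` AP_set a d m"
    then obtain i where i: "i < m" "y = 2*a + real (m-1) * d - (a + real i * d)"
      unfolding AP_set_def by auto
    then have "y = a + real (m - 1 - i) * d" using refl_idx by simp
    moreover have "m - 1 - i < m" using i by simp
    ultimately show "y \<in> AP_set a d m" unfolding AP_set_def by blast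
  qed
  show "AP_set a d m \<subseteq> (\<lambda>x. 2*a + real (m-1) * d - x) ` AP_set a d m"
  proof
    fix y assume "y \<in> AP_set a d m"
    then obtain i where i: "i < m" "y = a + real i * d" unfolding AP_set_def by auto
    have j: "m - 1 - i < m" "m - 1 - (m - 1 - i) = i" using i by auto
    have "2*a + real (m-1) * d - (a + real (m - 1 - i) * d) = a + real (m - 1 - (m - 1 - i)) * d"
      by (rule refl_idx[OF j(1)])
    then have "y = 2*a + real (m-1) * d - (a + real (m - 1 - i) * d)" using i j by simp
    moreover have "a + real (m - 1 - i) * d \<in> AP_set a d m" using j unfolding AP_set_def by blast
    ultimately show "y \<in> (\<lambda>x. 2*a + real (m-1) * d - x) ` AP_set a d m" by blast
  qed
qed

theorem mainTheorem11:
  fixes n k m :: nat and a d p q :: real and A D :: "real set"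
  assumes "4 \<le> k" and "k \<le> n"
    and "d > 0" and "A = AP_set a d m"
    and "p = a + d" and "q = a + real (m - 2) * d"
    and "D \<subseteq> {p, q}"
    and "card (A - D) = n"
  shows "optimal_AP k n (A - D) \<longleftrightarrow>
           (D = {} \<or> ((k - 1) dvd n \<and> card D = 1))"
proof -
  define s where "s = k - 1"
  have k: "k = Suc s" "3 \<le> s" using assms(1) by (auto simp: s_def)
  have s0: "0 < s" using k by simp
  have sn: "s \<le> n" "Suc s \<le> n" using assms(2) k by auto
  let ?g = "\<lambda>i. a + real i * d"
  have A0: "A = AP_set a d m - ?g ` {}" using assms(4) by simp
  have finA: "finite A" unfolding assms(4) AP_set_image by simp
  have cardA: "card A = m" using card_AP_diff[OF assms(3), of "{}" m a] A0 by simp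
  have "card (A - D) \<le> card A" using finA by (simp add: card_mono)
  then have nm: "n \<le> m" using assms(8) cardA by simp
  have p: "p = ?g 1" using assms(5) by simp
  have q: "q = ?g (m-2)" using assms(6) by simp
  have pq: "p \<noteq> q" using p q assms(3) nm sn k by auto
  have ub: "S_AP k W \<le> fAP s n" if "finite W" "card W = n" for W
    using S_AP_bound[of k W] that k unfolding s_def by simp
  have W0: "finite (AP_set 0 1 n)" "card (AP_set 0 1 n) = n" "S_AP k (AP_set 0 1 n) = fAP s n"
  proof -
    show "finite (AP_set 0 1 n)" unfolding AP_set_image by simp
    show "card (AP_set 0 1 n) = n" using card_AP_diff[of 1 "{}" n 0] by simp
    show "S_AP k (AP_set 0 1 n) = fAP s n"
      using S_AP_index[of 1 s 0 n "{}"] card_ipairs_full[OF s0, of n] s0 k by simp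
  qed
  have notopt: "\<not> optimal_AP k n X" if "S_AP k X < fAP s n" for X
    using W0 that unfolding optimal_AP_def by force
  have opt: "optimal_AP k n X" if "finite X" "card X = n" "S_AP k X = fAP s n" for X
    using ub that unfolding optimal_AP_def by simp
  have pcase: "optimal_AP k n (A - {p}) \<longleftrightarrow> s dvd n" if cp: "card (A - {p}) = n"
  proof -
    have Ap: "A - {p} = AP_set a d m - ?g ` {1}" using assms(4) p by simp
    have "card (A - {p}) = m - 1" unfolding Ap using nm sn s0 by (subst card_AP_diff[OF assms(3)]) auto
    then have mn: "m = Suc n" using cp nm sn by simp
    have S: "S_AP k (A - {p}) = card (ipairs (Suc s) (Suc n) {1})"
      unfolding Ap mn k by (rule S_AP_index[OF assms(3) s0])
    show ?thesis
    proof (cases "s dvd n")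
      case True
      then show ?thesis using opt[of "A - {p}"] S R1_dvd[OF s0 sn(1) True] cp finA by simp
    next
      case False
      then show ?thesis using notopt[of "A - {p}"] S R1_ndvd[OF s0 sn(1) False] by simp
    qed
  qed
  have cases: "D = {} \<or> D = {p} \<or> D = {q} \<or> D = {p,q}" using assms(7) by blast
  show ?thesis
  proof -
    { assume D: "D = {}"
      have "S_AP k A = fAP s n"
        using S_AP_index[OF assms(3) s0, of a m "{}"] card_ipairs_full[OF s0, of m] A0 assms(8) cardA D k
        by simp
      then have "optimal_AP k n (A - D)" using opt[of A] finA cardA assms(8) D by simp
      then have ?thesis using D by simp }
    moreover
    { assume D: "D = {p}"
      have ?thesis using pcase assms(8) D k unfolding s_def by simp }
    moreover
    { assume D: "D = {q}"
      define c where "c = 2*a + real (m-1) * d"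
      have im: "(\<lambda>x. c - x) ` (A - {q}) = A - {p}"
      proof -
        have "(\<lambda>x. c - x) ` (A - {q}) = (\<lambda>x. c - x) ` A - (\<lambda>x. c - x) ` {q}"
          by (rule image_set_diff) (simp add: inj_on_def)
        moreover have "(\<lambda>x. c - x) ` A = A" unfolding c_def assms(4) by (rule refl_AP)
        moreover have "c - q = p"
        proof -
          have "m - 2 < m" using nm sn by simp
          then have "c - q = a + real (m - 1 - (m - 2)) * d" unfolding c_def q by (rule refl_idx)
          moreover have "m - 1 - (m - 2) = 1" using nm sn s0 by simp
          ultimately show ?thesis using p by simp
        qed
        ultimately show ?thesis by simp
      qed
      have finq: "finite (A - {q})" using finA by simp
      have cq: "card (A - {p}) = card (A - {q})"
        unfolding im[symmetric] by (rule card_image) (simp add: inj_on_def)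
      have Sq: "S_AP k (A - {p}) = S_AP k (A - {q})"
        unfolding im[symmetric] by (rule S_AP_reflect[OF finq]) (use k in simp)
      have "optimal_AP k n (A - {q}) = optimal_AP k n (A - {p})"
        by (rule optimal_cong) (use finA cq Sq in auto)
      then have ?thesis using pcase cq assms(8) D k unfolding s_def by simp }
    moreover
    { assume D: "D = {p,q}"
      have Apq: "A - D = AP_set a d m - ?g ` {1, m-2}" using assms(4) p q D by simp
      have c2: "card {1, m-2} = 2" using nm sn k(2) by simp
      have "card (A - D) = m - 2" unfolding Apq using nm sn k(2) c2 by (subst card_AP_diff[OF assms(3)]) auto
      then have mn: "m = Suc (Suc n)" using assms(8) nm sn k(2) by simp
      have "S_AP k (A - D) = card (ipairs (Suc s) m {1, m-2})"
        unfolding Apq k by (rule S_AP_index[OF assms(3) s0])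
      moreover have "m - 2 = n" using mn by simp
      ultimately have "S_AP k (A - D) = card (ipairs (Suc s) (Suc (Suc n)) {1, n})"
        using mn by simp
      then have "\<not> optimal_AP k n (A - D)" using notopt R2_count[OF k(2) sn(2)] by simp
      moreover have "card D = 2" using D pq by simp
      ultimately have ?thesis using D pq by auto }
    ultimately show ?thesis using cases by blast
  qed
qed

end
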